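(* Let $d\ge1$, $\alpha\in(0,1)$, $\sigma_+,\sigma_->0$, and let $\mathcal{D}$ be the distribution on $\mathbb{R}^d\times\{\pm1\}$ with $y=+1$ with probability $\alpha$ and $y=-1$ with probability $1-\alpha$, where $\boldsymbol{x}\sim\mathcal{N}(\boldsymbol{1},\sigma_+^2 I)$ if $y=+1$ and $\boldsymbol{x}\sim\mathcal{N}(-\boldsymbol{1},\sigma_-^2 I)$ if $y=-1$, with $\boldsymbol{1}=(1,\dots,1)\in\mathbb{R}^d$. Let $f^*(\boldsymbol{x})=\mathrm{sign}(\langle\boldsymbol{w^*},\boldsymbol{x}\rangle+b^* )$ be the linear model minimizing the misclassification risk $R(f)=\alpha\,\mathbb{P}(f(\boldsymbol{x})=-1\mid y=+1)+(1-\alpha)\,\mathbb{P}(f(\boldsymbol{x})=+1\mid y=-1)$ on $\mathcal{D}$. If $\sigma_+>\sigma_-$ and $\frac{\alpha\sigma_-}{(1-\alpha)\sigma_+}>1$, then $S_{I,+1}(f^* )>S_{I,-1}(f^* )$.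
   Context: Fix $\sigma_I\ge0$ and let $\boldsymbol{\epsilon}_I\sim\mathcal{N}(\boldsymbol{0},\sigma_I^2 I)$ be independent of $\boldsymbol{x}$. The input smoothness of class $+1$ is $S_{I,+1}(f)=\mathbb{P}(\langle\boldsymbol{w},\boldsymbol{x}+\boldsymbol{\epsilon}_I\rangle+b>0\mid y=+1)$ and of class $-1$ is $S_{I,-1}(f)=\mathbb{P}(\langle\boldsymbol{w},\boldsymbol{x}+\boldsymbol{\epsilon}_I\rangle+b<0\mid y=-1)$, for $f(\boldsymbol{x})=\mathrm{sign}(\langle\boldsymbol{w},\boldsymbol{x}\rangle+b)$. *)

theory Defs
  imports "HOL-Probability.Probability"
begin

definition mvn_density :: "real^'n::finite \<Rightarrow> real \<Rightarrow> real^'n \<Rightarrow> real" where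
  "mvn_density mu s x =
     (2 * pi * s * s) powr (- (real CARD('n)) / 2) * exp (- (norm (x - mu) * norm (x - mu)) / (2 * s * s))"

definition gauss :: "real^'n::finite \<Rightarrow> real \<Rightarrow> (real^'n) measure" where
  "gauss mu s = (if s = 0 then return lborel mu
                 else density lborel (\<lambda>x. ennreal (mvn_density mu s x)))"

definition ones :: "real^'n::finite" where
  "ones = (\<chi> i. 1)"

text \<open>Linear classifier f(x) = sign(<w,x> + b), with values +1 / -1
  (convention: +1 iff <w,x> + b > 0, matching the strict inequality in S_{I,+1}).\<close>
definition lin_clf :: "real^'n::finite \<Rightarrow> real \<Rightarrow> real^'n \<Rightarrow> real" where
  "lin_clf w b x = (if inner w x + b > 0 then 1 else -1)"

definition lin_risk :: "real \<Rightarrow> real \<Rightarrow> real \<Rightarrow> real^'n::finite \<Rightarrow> real \<Rightarrow> real" where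
  "lin_risk alpha sp sm w b =
     alpha * measure (gauss ones sp) {x. lin_clf w b x = -1}
     + (1 - alpha) * measure (gauss (- ones) sm) {x. lin_clf w b x = 1}"

definition smooth_pos :: "real \<Rightarrow> real \<Rightarrow> real^'n::finite \<Rightarrow> real \<Rightarrow> real" where
  "smooth_pos sI sp w b =
     measure (gauss ones sp \<Otimes>\<^sub>M gauss 0 sI) {(x, e). inner w (x + e) + b > 0}"

definition smooth_neg :: "real \<Rightarrow> real \<Rightarrow> real^'n::finite \<Rightarrow> real \<Rightarrow> real" where
  "smooth_neg sI sm w b =
     measure (gauss (- ones) sm \<Otimes>\<^sub>M gauss 0 sI) {(x, e). inner w (x + e) + b < 0}"

end

theory Submission
  imports Defs
begin

abbreviation N01 :: "real measure" where
  "N01 \<equiv> density lborel (\<lambda>x. ennreal (std_normal_density x))"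

definition Phi :: "real \<Rightarrow> real" where
  "Phi t = measure N01 {..t}"

lemma prob_N01: "prob_space N01"
  by (rule prob_space_normal_density) simp

lemma N01_measure:
  assumes "A \<in> sets borel"
  shows "measure N01 A = (LINT x:A|lborel. std_normal_density x)"
proof -
  have int0: "integrable lborel (\<lambda>x. std_normal_density x * indicator A x)"
    using assms by (intro integrable_real_mult_indicator) auto
  have int: "integrable lborel (\<lambda>x. indicator A x * std_normal_density x)"
    using int0 by (simp add: mult.commute)
  have "emeasure N01 A = (\<integral>\<^sup>+x. ennreal (std_normal_density x) * indicator A x \<partial>lborel)"
    using assms by (simp add: emeasure_density)
  also have "\<dots> = (\<integral>\<^sup>+x. ennreal (indicator A x * std_normal_density x) \<partial>lborel)"
    by (intro nn_integral_cong) (auto split: split_indicator)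
  also have "\<dots> = ennreal (LINT x|lborel. indicator A x * std_normal_density x)"
    using int by (intro nn_integral_eq_integral) auto
  finally show ?thesis
    by (simp add: measure_def set_lebesgue_integral_def integral_nonneg_AE)
qed

lemma N01_measure_Icc:
  assumes "a \<le> b"
  shows "measure N01 {a..b} = integral {a..b} std_normal_density"
proof -
  have c: "continuous_on {a..b} std_normal_density"
    unfolding normal_density_def by (intro continuous_intros) auto
  have "set_integrable lborel {a..b} std_normal_density"
    by (rule borel_integrable_atLeastAtMost') (rule c)
  then show ?thesis
    by (simp add: N01_measure set_borel_integral_eq_integral)
qed

lemma N01_single: "measure N01 {a} = 0"
  using N01_measure_Icc[of a a] by simp

lemma Phi_split:
  assumes "a \<le> t"
  shows "Phi t = Phi a + integral {a..t} std_normal_density"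
proof -
  interpret prob_space N01 by (rule prob_N01)
  have "{..t} = {..a} \<union> {a<..t}" using assms by auto
  then have "Phi t = Phi a + measure N01 {a<..t}"
  proof -
    have d: "{..a} \<inter> {a<..t} = {}" by auto
    show ?thesis unfolding Phi_def using finite_measure_Union[of "{..a}" "{a<..t}"] d
      \<open>{..t} = {..a} \<union> {a<..t}\<close> by simp
  qed
  moreover have "measure N01 {a..t} = measure N01 {a} + measure N01 {a<..t}"
  proof -
    have "{a..t} = {a} \<union> {a<..t}" using assms by auto
    then show ?thesis by (subst finite_measure_Union[symmetric]) auto
  qed
  ultimately show ?thesis using N01_measure_Icc[OF assms] N01_single by simp
qed

lemma Phi_deriv: "(Phi has_real_derivative std_normal_density t) (at t)"
proof -
  have c: "continuous_on {t-1..t+1} std_normal_density"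
    unfolding normal_density_def by (intro continuous_intros) auto
  have "((\<lambda>u. integral {t-1..u} std_normal_density) has_vector_derivative std_normal_density t) (at t within {t-1..t+1})"
    by (rule integral_has_vector_derivative[OF c]) auto
  then have "((\<lambda>u. integral {t-1..u} std_normal_density) has_vector_derivative std_normal_density t) (at t)"
    by (subst (asm) at_within_interior) auto
  then have "((\<lambda>u. Phi (t-1) + integral {t-1..u} std_normal_density) has_real_derivative std_normal_density t) (at t)"
    by (auto simp: has_real_derivative_iff_has_vector_derivative intro!: derivative_eq_intros)
  then show ?thesis
  proof (rule has_field_derivative_transform_within_open[where S="{t-1<..}"])
    fix u :: real assume "u \<in> {t-1<..}"
    then show "Phi (t - 1) + integral {t - 1..u} std_normal_density = Phi u"
      using Phi_split[of "t-1" u] by simp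
  qed auto
qed

lemma Phi_strict_mono: "a < b \<Longrightarrow> Phi a < Phi b"
  by (rule DERIV_pos_imp_increasing) (auto intro!: exI Phi_deriv normal_density_pos)

lemma Phi_mono_iff: "Phi a < Phi b \<longleftrightarrow> a < b"
  using Phi_strict_mono[of a b] Phi_strict_mono[of b a] by (cases a b rule: linorder_cases) auto

lemma std_distr_le:
  assumes "prob_space M" "distributed M lborel Z std_normal_density"
  shows "measure M {x\<in>space M. Z x \<le> t} = Phi t"
proof -
  have d: "distr M lborel Z = N01" and Zm: "Z \<in> measurable M lborel"
    using assms(2) unfolding distributed_def by auto
  have "measure M {x\<in>space M. Z x \<le> t} = measure M (Z -` {..t} \<inter> space M)"
    by (intro arg_cong[where f="measure M"]) auto
  also have "\<dots> = measure (distr M lborel Z) {..t}"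
    using Zm by (subst measure_distr) auto
  finally show ?thesis using d by (simp add: Phi_def)
qed

lemma std_distr_eq:
  assumes "prob_space M" "distributed M lborel Z std_normal_density"
  shows "measure M {x\<in>space M. Z x = t} = 0"
proof -
  have d: "distr M lborel Z = N01" and Zm: "Z \<in> measurable M lborel"
    using assms(2) unfolding distributed_def by auto
  have "measure M {x\<in>space M. Z x = t} = measure M (Z -` {t} \<inter> space M)"
    by (intro arg_cong[where f="measure M"]) auto
  also have "\<dots> = measure (distr M lborel Z) {t}"
    using Zm by (subst measure_distr) auto
  finally show ?thesis using d N01_single by simp
qed

lemma std_distr_less:
  assumes "prob_space M" "distributed M lborel Z std_normal_density"
  shows "measure M {x\<in>space M. Z x < t} = Phi t"
proof -
  interpret prob_space M by fact
  have Zm[measurable]: "Z \<in> borel_measurable M"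
    using assms(2) unfolding distributed_def by auto
  have "{x\<in>space M. Z x \<le> t} = {x\<in>space M. Z x < t} \<union> {x\<in>space M. Z x = t}" by auto
  moreover have "{x\<in>space M. Z x < t} \<inter> {x\<in>space M. Z x = t} = {}" by auto
  ultimately have "measure M {x\<in>space M. Z x \<le> t} = measure M {x\<in>space M. Z x < t} + measure M {x\<in>space M. Z x = t}"
    using finite_measure_Union[of "{x\<in>space M. Z x < t}" "{x\<in>space M. Z x = t}"] by simp
  then show ?thesis using std_distr_le[OF assms] std_distr_eq[OF assms] by simp
qed

lemma std_distr_gt:
  assumes "prob_space M" "distributed M lborel Z std_normal_density"
  shows "measure M {x\<in>space M. Z x > t} = 1 - Phi t"
proof -
  interpret prob_space M by fact
  have Zm[measurable]: "Z \<in> borel_measurable M"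
    using assms(2) unfolding distributed_def by auto
  have eq: "{x\<in>space M. Z x > t} = space M - {x\<in>space M. Z x \<le> t}" by auto
  have ev0: "Z -` {..t} \<inter> space M \<in> events" by (rule measurable_sets[OF Zm]) simp
  have "{x\<in>space M. Z x \<le> t} = Z -` {..t} \<inter> space M" by auto
  then have ev: "{x\<in>space M. Z x \<le> t} \<in> events" using ev0 by simp
  have "measure M {x\<in>space M. Z x > t} = 1 - measure M {x\<in>space M. Z x \<le> t}"
    unfolding eq by (rule prob_compl[OF ev])
  then show ?thesis using std_distr_le[OF assms] by simp
qed

lemma N01_distr_id: "distributed N01 lborel (\<lambda>x. x) std_normal_density"
proof -
  have "distr N01 lborel (\<lambda>x. x) = N01" by (rule distr_id2) simp
  moreover have "(\<lambda>x. x) \<in> measurable N01 lborel"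
    by (simp add: measurable_ident_sets)
  ultimately show ?thesis unfolding distributed_def by simp
qed

lemma Phi_neg: "Phi (-t) = 1 - Phi t"
proof -
  interpret prob_space N01 by (rule prob_N01)
  have "distributed N01 lborel (\<lambda>x. 0 + -1 * x) (normal_density (0 + -1 * 0) (\<bar>-1\<bar> * 1))"
    by (rule normal_density_affine[OF N01_distr_id]) auto
  then have d: "distributed N01 lborel (\<lambda>x. - x) std_normal_density" by simp
  have "Phi (-t) = measure N01 {x\<in>space N01. - x < - t}"
    using std_distr_less[OF prob_N01 d, of "-t"] by simp
  also have "\<dots> = measure N01 {x\<in>space N01. x > t}" by simp
  also have "\<dots> = 1 - Phi t" using std_distr_gt[OF prob_N01 N01_distr_id] by simp
  finally show ?thesis .
qed

lemma normal_events:
  assumes "prob_space M" "distributed M lborel Y (normal_density \<mu> \<sigma>)" "\<sigma> > 0"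
  shows "measure M {x\<in>space M. Y x + b < 0} = Phi (-(\<mu>+b)/\<sigma>)"
    and "measure M {x\<in>space M. Y x + b > 0} = Phi ((\<mu>+b)/\<sigma>)"
proof -
  interpret prob_space M by fact
  have Z: "distributed M lborel (\<lambda>x. (Y x - \<mu>) / \<sigma>) std_normal_density"
    using normal_standard_normal_convert[OF assms(3)] assms(2) by simp
  have c1: "(y - \<mu>) / \<sigma> < -(\<mu>+b)/\<sigma> \<longleftrightarrow> y + b < 0" for y
  proof -
    have "(y - \<mu>) / \<sigma> < -(\<mu>+b)/\<sigma> \<longleftrightarrow> y - \<mu> < -(\<mu>+b)"
      using assms(3) by (simp add: divide_less_cancel)
    then show ?thesis by linarith
  qed
  have e1: "{x\<in>space M. Y x + b < 0} = {x\<in>space M. (Y x - \<mu>) / \<sigma> < -(\<mu>+b)/\<sigma>}"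
    using c1 by blast
  show "measure M {x\<in>space M. Y x + b < 0} = Phi (-(\<mu>+b)/\<sigma>)"
    unfolding e1 by (rule std_distr_less[OF assms(1) Z])
  have c2: "(y - \<mu>) / \<sigma> > -(\<mu>+b)/\<sigma> \<longleftrightarrow> y + b > 0" for y
  proof -
    have "-(\<mu>+b)/\<sigma> < (y - \<mu>) / \<sigma> \<longleftrightarrow> -(\<mu>+b) < y - \<mu>"
      using assms(3) by (simp add: divide_less_cancel)
    then show ?thesis by linarith
  qed
  have e2: "{x\<in>space M. Y x + b > 0} = {x\<in>space M. (Y x - \<mu>) / \<sigma> > -(\<mu>+b)/\<sigma>}"
    using c2 by blast
  show "measure M {x\<in>space M. Y x + b > 0} = Phi ((\<mu>+b)/\<sigma>)"
    unfolding e2 std_distr_gt[OF assms(1) Z] using Phi_neg[of "(\<mu>+b)/\<sigma>"] by (simp add: minus_divide_left)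
qed

lemma PiM_density_prod:
  fixes g :: "'i \<Rightarrow> real \<Rightarrow> real"
  assumes I: "finite I" and gm[measurable]: "\<And>i. g i \<in> borel_measurable borel"
    and gnn: "\<And>i x. 0 \<le> g i x"
    and gp: "\<And>i. prob_space (density lborel (\<lambda>x. ennreal (g i x)))"
  shows "density (PiM I (\<lambda>_. lborel)) (\<lambda>f. \<Prod>i\<in>I. ennreal (g i (f i)))
         = PiM I (\<lambda>i. density lborel (\<lambda>x. ennreal (g i x)))"
proof -
  interpret L: product_sigma_finite "\<lambda>_. lborel" by standard
  have sf: "sigma_finite_measure (density lborel (\<lambda>x. ennreal (g i x)))" for i
    using gp[of i] by (simp add: prob_space_imp_sigma_finite)
  interpret G: product_sigma_finite "\<lambda>i. density lborel (\<lambda>x. ennreal (g i x))"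
    unfolding product_sigma_finite_def using sf by blast
  show ?thesis
  proof (rule G.PiM_eqI[OF I])
    show "sets (density (PiM I (\<lambda>_. lborel)) (\<lambda>f. \<Prod>i\<in>I. ennreal (g i (f i))))
          = sets (PiM I (\<lambda>i. density lborel (\<lambda>x. ennreal (g i x))))"
      unfolding sets_density by (intro sets_PiM_cong refl) (simp only: sets_density)
  next
    fix A assume A: "\<And>i. i \<in> I \<Longrightarrow> A i \<in> sets (density lborel (\<lambda>x. ennreal (g i x)))"
    then have A'[measurable]: "\<And>i. i \<in> I \<Longrightarrow> A i \<in> sets borel" by simp
    have PE: "Pi\<^sub>E I A \<in> sets (PiM I (\<lambda>_. lborel))"
      using A' by (intro sets_PiM_I_finite I) auto
    have "emeasure (density (PiM I (\<lambda>_. lborel)) (\<lambda>f. \<Prod>i\<in>I. ennreal (g i (f i)))) (Pi\<^sub>E I A)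
       = (\<integral>\<^sup>+f. (\<Prod>i\<in>I. ennreal (g i (f i))) * indicator (Pi\<^sub>E I A) f \<partial>PiM I (\<lambda>_. lborel))"
      using PE by (subst emeasure_density) auto
    also have "\<dots> = (\<integral>\<^sup>+f. (\<Prod>i\<in>I. ennreal (g i (f i)) * indicator (A i) (f i)) \<partial>PiM I (\<lambda>_. lborel))"
    proof (intro nn_integral_cong)
      fix f assume "f \<in> space (PiM I (\<lambda>_. lborel :: real measure))"
      then have fe: "f \<in> extensional I" by (auto simp: space_PiM PiE_def)
      have "indicator (Pi\<^sub>E I A) f = (\<Prod>i\<in>I. indicator (A i) (f i) :: ennreal)"
        using fe I by (auto simp: indicator_def PiE_def prod_ennreal Pi_def)
      then show "(\<Prod>i\<in>I. ennreal (g i (f i))) * indicator (Pi\<^sub>E I A) f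
          = (\<Prod>i\<in>I. ennreal (g i (f i)) * indicator (A i) (f i))"
        by (simp add: prod.distrib)
    qed
    also have "\<dots> = (\<Prod>i\<in>I. (\<integral>\<^sup>+x. ennreal (g i x) * indicator (A i) x \<partial>lborel))"
      using A' by (subst L.product_nn_integral_prod[OF I]) auto
    also have "\<dots> = (\<Prod>i\<in>I. emeasure (density lborel (\<lambda>x. ennreal (g i x))) (A i))"
      using A' by (intro prod.cong refl) (simp add: emeasure_density)
    finally show "emeasure (density (PiM I (\<lambda>_. lborel)) (\<lambda>f. \<Prod>i\<in>I. ennreal (g i (f i)))) (Pi\<^sub>E I A)
       = (\<Prod>i\<in>I. emeasure (density lborel (\<lambda>x. ennreal (g i x))) (A i))" .
  qed
qed

lemma mvn_prod:
  fixes mu x :: "real^'n::finite"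
  assumes s: "s > 0"
  shows "mvn_density mu s x = (\<Prod>b\<in>Basis. normal_density (mu \<bullet> b) s (x \<bullet> b))"
proof -
  define v where "v = 2 * pi * s\<^sup>2"
  have v: "v > 0" using s by (simp add: v_def)
  have n2: "norm (x - mu) * norm (x - mu) = (\<Sum>b\<in>Basis. (x \<bullet> b - mu \<bullet> b)\<^sup>2)"
  proof -
    have "norm (x - mu) * norm (x - mu) = (x - mu) \<bullet> (x - mu)"
      by (simp add: power2_eq_square[symmetric] power2_norm_eq_inner)
    also have "\<dots> = (\<Sum>b\<in>Basis. ((x - mu) \<bullet> b) * ((x - mu) \<bullet> b))"
      by (rule euclidean_inner)
    finally show ?thesis by (simp add: inner_diff_left power2_eq_square)
  qed
  have "(\<Prod>b\<in>Basis. normal_density (mu \<bullet> b) s (x \<bullet> b))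
      = (\<Prod>b\<in>Basis. (1 / sqrt v) * exp (- (x \<bullet> b - mu \<bullet> b)\<^sup>2 / (2 * s\<^sup>2)))"
    unfolding normal_density_def v_def by simp
  also have "\<dots> = (1 / sqrt v) ^ card (Basis :: (real^'n) set) * exp (\<Sum>b\<in>Basis. - (x \<bullet> b - mu \<bullet> b)\<^sup>2 / (2 * s\<^sup>2))"
    by (simp only: prod.distrib prod_constant exp_sum[OF finite_Basis])
  also have "(\<Sum>b\<in>Basis. - (x \<bullet> b - mu \<bullet> b)\<^sup>2 / (2 * s\<^sup>2)) = - (norm (x - mu) * norm (x - mu)) / (2 * s * s)"
    unfolding n2 by (simp add: sum_divide_distrib[symmetric] sum_negf power2_eq_square mult.assoc)
  also have "(1 / sqrt v) ^ card (Basis :: (real^'n) set) = (2 * pi * s * s) powr (- real CARD('n) / 2)"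
  proof -
    have "1 / sqrt v = v powr (- (1/2))"
      using v by (simp add: powr_half_sqrt[symmetric] powr_minus_divide)
    then have "(1 / sqrt v) ^ card (Basis :: (real^'n) set) = v powr (real (card (Basis :: (real^'n) set)) * - (1/2))"
      using v by (simp add: powr_power)
    moreover have "card (Basis :: (real^'n) set) = CARD('n)" by simp
    ultimately show ?thesis by (simp add: v_def power2_eq_square mult.assoc)
  qed
  finally show ?thesis unfolding mvn_density_def by simp
qed

lemma T_inner:
  fixes f :: "(real^'n::finite) \<Rightarrow> real" and b :: "real^'n"
  assumes "b \<in> Basis"
  shows "(\<Sum>c\<in>Basis. f c *\<^sub>R c) \<bullet> b = f b"
proof -
  have "(\<Sum>c\<in>Basis. f c *\<^sub>R c) \<bullet> b = (\<Sum>c\<in>Basis. f c * (c \<bullet> b))"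
    by (simp add: inner_sum_left)
  also have "\<dots> = (\<Sum>c\<in>Basis. if c = b then f b else 0)"
    using assms by (intro sum.cong refl) (simp add: inner_Basis)
  also have "\<dots> = f b" using assms by simp
  finally show ?thesis .
qed

lemma gauss_lin:
  fixes mu w :: "real^'n::finite"
  assumes s: "s > 0" and w: "w \<noteq> 0"
  shows "distributed (gauss mu s) lborel (\<lambda>x. w \<bullet> x) (normal_density (w \<bullet> mu) (s * norm w))"
proof -
  define g where "g b = normal_density (mu \<bullet> b) s" for b :: "real^'n"
  define M where "M b = density lborel (\<lambda>x. ennreal (g b x))" for b :: "real^'n"
  define P where "P = PiM (Basis :: (real^'n) set) M"
  define T where "T f = (\<Sum>b\<in>Basis. f b *\<^sub>R b)" for f :: "(real^'n) \<Rightarrow> real"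
  have gm[measurable]: "g b \<in> borel_measurable borel" for b unfolding g_def by simp
  have Mp: "prob_space (M b)" for b unfolding M_def g_def using s by (intro prob_space_normal_density)
  have Pp: "prob_space P" unfolding P_def using Mp by (intro prob_space_PiM)
  interpret P: prob_space P by (rule Pp)
  have sM[simp]: "sets (M b) = sets borel" for b unfolding M_def by simp
  have Tm[measurable]: "T \<in> measurable (PiM Basis (\<lambda>_. lborel)) borel"
    unfolding T_def by measurable
  have sP: "sets P = sets (PiM Basis (\<lambda>_. lborel))"
    unfolding P_def by (intro sets_PiM_cong refl) (simp only: M_def sets_density)
  have TmP[measurable]: "T \<in> measurable P borel"
    using Tm by (simp only: measurable_cong_sets[OF sP refl])
  have lb: "(lborel :: (real^'n) measure) = distr (PiM Basis (\<lambda>_. lborel)) borel T"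
    unfolding T_def by (rule lborel_eq)
  have mvnm[measurable]: "(\<lambda>x. ennreal (mvn_density mu s x)) \<in> borel_measurable borel"
    unfolding mvn_density_def by measurable
  have gauss_eq: "gauss mu s = distr P borel T"
  proof -
    have "gauss mu s = density lborel (\<lambda>x. ennreal (mvn_density mu s x))"
      using s by (simp add: gauss_def)
    also have "\<dots> = density (distr (PiM Basis (\<lambda>_. lborel)) borel T) (\<lambda>x. ennreal (mvn_density mu s x))"
      using lb by (rule arg_cong)
    also have "\<dots> = distr (density (PiM Basis (\<lambda>_. lborel)) (\<lambda>f. ennreal (mvn_density mu s (T f)))) borel T"
      by (rule density_distr) measurable
    also have "(\<lambda>f. ennreal (mvn_density mu s (T f))) = (\<lambda>f. \<Prod>b\<in>Basis. ennreal (g b (f b)))"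
    proof
      fix f :: "(real^'n) \<Rightarrow> real"
      have "mvn_density mu s (T f) = (\<Prod>b\<in>Basis. g b (f b))"
        unfolding mvn_prod[OF s] g_def T_def by (intro prod.cong refl) (simp add: T_inner)
      then show "ennreal (mvn_density mu s (T f)) = (\<Prod>b\<in>Basis. ennreal (g b (f b)))"
        by (simp add: prod_ennreal g_def)
    qed
    also have "density (PiM Basis (\<lambda>_. lborel)) (\<lambda>f. \<Prod>b\<in>Basis. ennreal (g b (f b))) = P"
      unfolding P_def M_def using Mp[unfolded M_def]
      by (intro PiM_density_prod) (auto simp: g_def)
    finally show ?thesis .
  qed
  have indep: "P.indep_vars M (\<lambda>b f. f b) Basis"
  proof (subst P.indep_vars_iff_distr_eq_PiM')
    show "(Basis :: (real^'n) set) \<noteq> {}" by simp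
    show "(\<lambda>f. f b) \<in> measurable P (M b)" if "b \<in> Basis" for b
      unfolding P_def using that by simp
    have "distr P (PiM Basis M) (\<lambda>x. \<lambda>b\<in>Basis. x b) = distr P P (\<lambda>x. x)"
      by (rule distr_cong) (auto simp: P_def space_PiM PiE_def extensional_restrict)
    also have "\<dots> = P" by (rule distr_id)
    also have "P = PiM Basis (\<lambda>b. distr P (M b) (\<lambda>x. x b))"
      unfolding P_def using Mp by (intro PiM_cong refl) (simp add: distr_PiM_component)
    finally show "distr P (PiM Basis M) (\<lambda>x. \<lambda>b\<in>Basis. x b) = PiM Basis (\<lambda>b. distr P (M b) (\<lambda>x. x b))" .
  qed
  have coord: "distributed P lborel (\<lambda>f. f b) (g b)" if "b \<in> Basis" for b
  proof -
    have "distr P lborel (\<lambda>f. f b) = distr P (M b) (\<lambda>f. f b)"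
      by (rule distr_cong) auto
    also have "\<dots> = M b" unfolding P_def using Mp that by (simp add: distr_PiM_component)
    moreover have "(\<lambda>f. f b) \<in> borel_measurable P"
      using measurable_component_singleton[OF that, of M] unfolding P_def
      by (simp only: measurable_cong_sets[OF refl sM[of b]])
    ultimately show ?thesis unfolding distributed_def M_def using that
      by (auto simp: P_def)
  qed
  define I where "I = {b\<in>Basis. w \<bullet> b \<noteq> 0}"
  have I: "finite I" "I \<subseteq> Basis" unfolding I_def by auto
  have Ine: "I \<noteq> {}"
  proof
    assume "I = {}"
    then have "w \<bullet> b = 0 \<bullet> b" if "b \<in> Basis" for b using that by (auto simp: I_def)
    then have "w = 0" by (rule euclidean_eqI)
    then show False using w by simp
  qed
  have indI: "P.indep_vars (\<lambda>_. borel) (\<lambda>b f. (w \<bullet> b) * f b) I"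
    using P.indep_vars_subset[OF indep I(2)]
    by (rule P.indep_vars_compose2[where Y="\<lambda>b x. (w \<bullet> b) * x"])
      (simp add: measurable_cong_sets[OF sM refl])
  have dI: "distributed P lborel (\<lambda>f. (w \<bullet> b) * f b) (normal_density ((w \<bullet> b) * (mu \<bullet> b)) (\<bar>w \<bullet> b\<bar> * s))"
    if "b \<in> I" for b
  proof -
    have "distributed P lborel (\<lambda>f. 0 + (w \<bullet> b) * f b) (normal_density (0 + (w \<bullet> b) * (mu \<bullet> b)) (\<bar>w \<bullet> b\<bar> * s))"
      using that coord[of b] I(2) s
      by (intro P.normal_density_affine) (auto simp: g_def I_def)
    then show ?thesis by simp
  qed
  have sumd: "distributed P lborel (\<lambda>f. \<Sum>b\<in>I. (w \<bullet> b) * f b)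
      (normal_density (\<Sum>b\<in>I. (w \<bullet> b) * (mu \<bullet> b)) (sqrt (\<Sum>b\<in>I. (\<bar>w \<bullet> b\<bar> * s)\<^sup>2)))"
    using I(1) Ine indI dI s
    by (intro P.sum_indep_normal) (auto simp: I_def)
  have e1: "(\<Sum>b\<in>I. (w \<bullet> b) * f b) = w \<bullet> T f" for f
  proof -
    have "(\<Sum>b\<in>I. (w \<bullet> b) * f b) = (\<Sum>b\<in>Basis. (w \<bullet> b) * f b)"
      using I by (intro sum.mono_neutral_left) (auto simp: I_def)
    also have "\<dots> = w \<bullet> T f"
      by (subst euclidean_inner) (simp add: T_def T_inner)
    finally show ?thesis .
  qed
  have e2: "(\<Sum>b\<in>I. (w \<bullet> b) * (mu \<bullet> b)) = w \<bullet> mu"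
  proof -
    have "(\<Sum>b\<in>I. (w \<bullet> b) * (mu \<bullet> b)) = (\<Sum>b\<in>Basis. (w \<bullet> b) * (mu \<bullet> b))"
      using I by (intro sum.mono_neutral_left) (auto simp: I_def)
    then show ?thesis by (simp add: euclidean_inner[of w mu])
  qed
  have e3: "sqrt (\<Sum>b\<in>I. (\<bar>w \<bullet> b\<bar> * s)\<^sup>2) = s * norm w"
  proof -
    have "(\<Sum>b\<in>I. (\<bar>w \<bullet> b\<bar> * s)\<^sup>2) = (\<Sum>b\<in>Basis. (\<bar>w \<bullet> b\<bar> * s)\<^sup>2)"
      using I by (intro sum.mono_neutral_left) (auto simp: I_def)
    also have "\<dots> = s\<^sup>2 * (\<Sum>b\<in>Basis. (w \<bullet> b) * (w \<bullet> b))"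
      by (simp add: sum_distrib_left power2_eq_square mult_ac)
    also have "(\<Sum>b\<in>Basis. (w \<bullet> b) * (w \<bullet> b)) = (norm w)\<^sup>2"
      by (simp add: euclidean_inner[of w w, symmetric] power2_norm_eq_inner)
    finally show ?thesis using s by (simp add: real_sqrt_mult)
  qed
  have sumd': "distributed P lborel (\<lambda>f. w \<bullet> T f) (normal_density (w \<bullet> mu) (s * norm w))"
    using sumd unfolding e2 e3 e1 .
  have "distr (gauss mu s) lborel (\<lambda>x. w \<bullet> x) = distr P lborel ((\<lambda>x. w \<bullet> x) \<circ> T)"
    unfolding gauss_eq by (rule distr_distr) measurable
  also have "\<dots> = density lborel (normal_density (w \<bullet> mu) (s * norm w))"
    using sumd' unfolding distributed_def by (simp add: comp_def)
  finally show ?thesis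
    unfolding distributed_def using s by (auto simp: gauss_def)
qed

lemma sets_gauss[simp, measurable_cong]: "sets (gauss mu s) = sets borel"
  by (simp add: gauss_def)

lemma space_gauss[simp]: "space (gauss mu s) = UNIV"
  by (simp add: gauss_def)

lemma distributed_normal_prob:
  assumes "distributed M lborel X (normal_density \<mu> \<sigma>)" "\<sigma> > 0"
  shows "prob_space M"
proof (rule prob_spaceI)
  have Xm: "X \<in> measurable M lborel" and d: "distr M lborel X = density lborel (normal_density \<mu> \<sigma>)"
    using assms(1) unfolding distributed_def by auto
  have "emeasure M (space M) = emeasure M (X -` UNIV \<inter> space M)" by simp
  also have "\<dots> = emeasure (distr M lborel X) UNIV"
    using Xm by (subst emeasure_distr) auto
  also have "\<dots> = 1" unfolding d
    using prob_space.emeasure_space_1[OF prob_space_normal_density[OF assms(2)]] by simp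
  finally show "emeasure M (space M) = 1" .
qed

lemma ones_nz: "(ones :: real^'n::finite) \<noteq> 0"
  by (simp add: ones_def vec_eq_iff)

lemma gauss_prob: "s > 0 \<Longrightarrow> prob_space (gauss (mu :: real^'n::finite) s)"
  using gauss_lin[OF _ ones_nz] distributed_normal_prob
  by (metis mult_pos_pos zero_less_norm_iff ones_nz)

lemma gauss_prob': "s \<ge> 0 \<Longrightarrow> prob_space (gauss (mu :: real^'n::finite) s)"
  using gauss_prob[of s mu] by (cases "s = 0") (auto simp: gauss_def intro: prob_space_return)

lemma gauss_pos_event:
  fixes mu w :: "real^'n::finite"
  assumes s: "s > 0" and w: "w \<noteq> 0"
  shows "measure (gauss mu s) {x. w \<bullet> x + b > 0} = Phi ((w \<bullet> mu + b) / (s * norm w))"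
  using normal_events(2)[OF gauss_prob[OF s] gauss_lin[OF s w], where b=b] s w by simp

lemma gauss_nonpos_event:
  fixes mu w :: "real^'n::finite"
  assumes s: "s > 0" and w: "w \<noteq> 0"
  shows "measure (gauss mu s) {x. \<not> (w \<bullet> x + b > 0)} = 1 - Phi ((w \<bullet> mu + b) / (s * norm w))"
proof -
  interpret prob_space "gauss mu s" by (rule gauss_prob[OF s])
  have ev: "{x. w \<bullet> x + b > 0} \<in> events" by simp
  have "{x. \<not> (w \<bullet> x + b > 0)} = space (gauss mu s) - {x. w \<bullet> x + b > 0}" by auto
  then show ?thesis using prob_compl[OF ev] gauss_pos_event[OF s w, where mu=mu and b=b] by simp
qed

lemma distr_pair_snd':
  assumes "prob_space M1" "prob_space M2"
  shows "distr (M1 \<Otimes>\<^sub>M M2) M2 snd = M2"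
proof (intro measure_eqI)
  interpret M1: prob_space M1 by fact
  interpret M2: prob_space M2 by fact
  fix A assume A: "A \<in> sets (distr (M1 \<Otimes>\<^sub>M M2) M2 snd)"
  from A have "emeasure (distr (M1 \<Otimes>\<^sub>M M2) M2 snd) A = emeasure (M1 \<Otimes>\<^sub>M M2) (space M1 \<times> A)"
    by (auto simp add: emeasure_distr space_pair_measure dest: sets.sets_into_space intro!: arg_cong2[where f=emeasure])
  with A show "emeasure (distr (M1 \<Otimes>\<^sub>M M2) M2 snd) A = emeasure M2 A"
    by (simp add: M2.emeasure_pair_measure_Times M1.emeasure_space_1)
qed simp

lemma smooth_distr:
  fixes mu w :: "real^'n::finite"
  assumes s: "s > 0" and sI: "sI \<ge> 0" and w: "w \<noteq> 0"
  shows "distributed (gauss mu s \<Otimes>\<^sub>M gauss 0 sI) lborel (\<lambda>p. w \<bullet> (fst p + snd p))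
           (normal_density (w \<bullet> mu) (norm w * sqrt (s\<^sup>2 + sI\<^sup>2)))"
proof -
  define G1 where "G1 = gauss mu s"
  define G2 where "G2 = gauss (0 :: real^'n) sI"
  interpret G1: prob_space G1 unfolding G1_def by (rule gauss_prob[OF s])
  interpret G2: prob_space G2 unfolding G2_def by (rule gauss_prob'[OF sI])
  have sG1[simp, measurable_cong]: "sets G1 = sets borel" unfolding G1_def by simp
  have sG2[simp, measurable_cong]: "sets G2 = sets borel" unfolding G2_def by simp
  have spG1[simp]: "space G1 = UNIV" unfolding G1_def by simp
  have spG2[simp]: "space G2 = UNIV" unfolding G2_def by simp
  have d1: "distr G1 lborel (\<lambda>x. w \<bullet> x) = density lborel (normal_density (w \<bullet> mu) (s * norm w))"
    using gauss_lin[OF s w] unfolding G1_def distributed_def by auto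
  have Ym: "(\<lambda>p. w \<bullet> (fst p + snd p)) \<in> measurable (G1 \<Otimes>\<^sub>M G2) lborel" by measurable
  have "distr (G1 \<Otimes>\<^sub>M G2) lborel (\<lambda>p. w \<bullet> (fst p + snd p))
           = density lborel (normal_density (w \<bullet> mu) (norm w * sqrt (s\<^sup>2 + sI\<^sup>2)))"
  proof (cases "sI = 0")
    case True
    have G2r: "G2 = return lborel 0" unfolding G2_def gauss_def using True by simp
    have "distr (G1 \<Otimes>\<^sub>M G2) lborel (\<lambda>p. w \<bullet> (fst p + snd p)) = distr G1 lborel (\<lambda>x. w \<bullet> x)"
    proof (rule measure_eqI)
      fix A assume A: "A \<in> sets (distr (G1 \<Otimes>\<^sub>M G2) lborel (\<lambda>p. w \<bullet> (fst p + snd p)))"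
      then have A'[measurable]: "A \<in> sets borel" by simp
      have "emeasure (distr (G1 \<Otimes>\<^sub>M G2) lborel (\<lambda>p. w \<bullet> (fst p + snd p))) A
          = emeasure (G1 \<Otimes>\<^sub>M G2) ((\<lambda>p. w \<bullet> (fst p + snd p)) -` A \<inter> space (G1 \<Otimes>\<^sub>M G2))"
        using Ym A' by (subst emeasure_distr) auto
      also have "\<dots> = (\<integral>\<^sup>+x. emeasure G2 (Pair x -` ((\<lambda>p. w \<bullet> (fst p + snd p)) -` A \<inter> space (G1 \<Otimes>\<^sub>M G2))) \<partial>G1)"
        by (rule G2.emeasure_pair_measure_alt) measurable
      also have "\<dots> = (\<integral>\<^sup>+x. indicator ((\<lambda>x. w \<bullet> x) -` A \<inter> space G1) x \<partial>G1)"
      proof (intro nn_integral_cong)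
        fix x
        have e: "Pair x -` ((\<lambda>p. w \<bullet> (fst p + snd p)) -` A \<inter> space (G1 \<Otimes>\<^sub>M G2)) = {e. w \<bullet> (x + e) \<in> A}"
          by (auto simp: space_pair_measure)
        have m: "{e. w \<bullet> (x + e) \<in> A} \<in> sets lborel" by measurable
        show "emeasure G2 (Pair x -` ((\<lambda>p. w \<bullet> (fst p + snd p)) -` A \<inter> space (G1 \<Otimes>\<^sub>M G2)))
            = indicator ((\<lambda>x. w \<bullet> x) -` A \<inter> space G1) x"
          unfolding e using m by (simp add: G2r indicator_def)
      qed
      also have "\<dots> = emeasure G1 ((\<lambda>x. w \<bullet> x) -` A \<inter> space G1)"
        by (rule nn_integral_indicator) measurable
      also have "\<dots> = emeasure (distr G1 lborel (\<lambda>x. w \<bullet> x)) A"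
        by (subst emeasure_distr) auto
      finally show "emeasure (distr (G1 \<Otimes>\<^sub>M G2) lborel (\<lambda>p. w \<bullet> (fst p + snd p))) A
          = emeasure (distr G1 lborel (\<lambda>x. w \<bullet> x)) A" .
    qed simp
    then show ?thesis using d1 True s by (simp add: abs_of_pos mult.commute)
  next
    case False
    then have sI': "sI > 0" using sI by simp
    define Q where "Q = G1 \<Otimes>\<^sub>M G2"
    have Qp: "prob_space Q" unfolding Q_def
      by (rule prob_space_pair) (unfold_locales)
    interpret Q: prob_space Q by (rule Qp)
    have sQ[measurable_cong]: "sets Q = sets (borel \<Otimes>\<^sub>M borel)"
      unfolding Q_def by (intro sets_pair_measure_cong) auto
    have d2: "distr G2 lborel (\<lambda>x. w \<bullet> x) = density lborel (normal_density (w \<bullet> 0) (sI * norm w))"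
      using gauss_lin[OF sI' w] unfolding G2_def distributed_def by auto
    have fstd: "distr Q G1 fst = G1" unfolding Q_def by (rule G2.distr_pair_fst)
    have sndd: "distr Q G2 snd = G2" unfolding Q_def
      by (rule distr_pair_snd') (unfold_locales)
    have Ud: "distr Q N (\<lambda>p. w \<bullet> fst p) = distr G1 N (\<lambda>x. w \<bullet> x)" if "sets N = sets borel" for N
    proof -
      have "distr Q N (\<lambda>p. w \<bullet> fst p) = distr (distr Q G1 fst) N (\<lambda>x. w \<bullet> x)"
        using that by (subst distr_distr) (auto simp: comp_def measurable_cong_sets[OF refl that] Q_def)
      then show ?thesis using fstd by simp
    qed
    have Vd: "distr Q N (\<lambda>p. w \<bullet> snd p) = distr G2 N (\<lambda>x. w \<bullet> x)" if "sets N = sets borel" for N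
    proof -
      have "distr Q N (\<lambda>p. w \<bullet> snd p) = distr (distr Q G2 snd) N (\<lambda>x. w \<bullet> x)"
        using that by (subst distr_distr) (auto simp: comp_def measurable_cong_sets[OF refl that] Q_def)
      then show ?thesis using sndd by simp
    qed
    have indep: "Q.indep_var borel (\<lambda>p. w \<bullet> fst p) borel (\<lambda>p. w \<bullet> snd p)"
    proof (subst Q.indep_var_distribution_eq, intro conjI)
      show "Q.random_variable borel (\<lambda>p. w \<bullet> fst p)" unfolding Q_def by measurable
      show "Q.random_variable borel (\<lambda>p. w \<bullet> snd p)" unfolding Q_def by measurable
      have sf: "sigma_finite_measure (distr G2 borel (\<lambda>x. w \<bullet> x))"
        by (intro prob_space_imp_sigma_finite prob_space.prob_space_distr) (unfold_locales, measurable)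
      have "distr Q borel (\<lambda>p. w \<bullet> fst p) \<Otimes>\<^sub>M distr Q borel (\<lambda>p. w \<bullet> snd p)
          = distr G1 borel (\<lambda>x. w \<bullet> x) \<Otimes>\<^sub>M distr G2 borel (\<lambda>x. w \<bullet> x)"
        using Ud[of borel] Vd[of borel] by simp
      also have "\<dots> = distr (G1 \<Otimes>\<^sub>M G2) (borel \<Otimes>\<^sub>M borel) (\<lambda>(x, y). (w \<bullet> x, w \<bullet> y))"
        by (rule pair_measure_distr[OF _ _ sf]) measurable
      also have "\<dots> = distr Q (borel \<Otimes>\<^sub>M borel) (\<lambda>p. (w \<bullet> fst p, w \<bullet> snd p))"
        unfolding Q_def by (rule distr_cong) auto
      finally show "distr Q borel (\<lambda>p. w \<bullet> fst p) \<Otimes>\<^sub>M distr Q borel (\<lambda>p. w \<bullet> snd p)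
          = distr Q (borel \<Otimes>\<^sub>M borel) (\<lambda>p. (w \<bullet> fst p, w \<bullet> snd p))" .
    qed
    have dU: "distributed Q lborel (\<lambda>p. w \<bullet> fst p) (normal_density (w \<bullet> mu) (s * norm w))"
      unfolding distributed_def using Ud[of lborel] d1 by auto
    have dV: "distributed Q lborel (\<lambda>p. w \<bullet> snd p) (normal_density (w \<bullet> 0) (sI * norm w))"
      unfolding distributed_def using Vd[of lborel] d2 by auto
    have "distributed Q lborel (\<lambda>p. w \<bullet> fst p + w \<bullet> snd p)
        (normal_density (w \<bullet> mu + w \<bullet> 0) (sqrt ((s * norm w)\<^sup>2 + (sI * norm w)\<^sup>2)))"
      by (rule Q.add_indep_normal[OF indep _ _ dU dV]) (use s sI' w in auto)
    moreover have "sqrt ((s * norm w)\<^sup>2 + (sI * norm w)\<^sup>2) = norm w * sqrt (s\<^sup>2 + sI\<^sup>2)"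
    proof -
      have "(s * norm w)\<^sup>2 + (sI * norm w)\<^sup>2 = (norm w)\<^sup>2 * (s\<^sup>2 + sI\<^sup>2)"
        by (simp add: power_mult_distrib algebra_simps)
      then show ?thesis by (simp add: real_sqrt_mult)
    qed
    ultimately have "distributed Q lborel (\<lambda>p. w \<bullet> (fst p + snd p))
        (normal_density (w \<bullet> mu) (norm w * sqrt (s\<^sup>2 + sI\<^sup>2)))"
      by (simp add: inner_add_right)
    then show ?thesis unfolding distributed_def Q_def by auto
  qed
  then show ?thesis using Ym unfolding distributed_def G1_def G2_def by auto
qed

lemma Phi_nonneg: "Phi t \<ge> 0"
  unfolding Phi_def by simp

lemma key_analysis:
  fixes alpha sp sm sI A B :: real
  assumes a0: "0 < alpha" and a1: "alpha < 1" and sm: "sm > 0" and spm: "sp > sm" and sI: "sI \<ge> 0"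
    and cond: "alpha * sm / ((1 - alpha) * sp) > 1"
    and foc: "alpha * std_normal_density A / sp = (1 - alpha) * std_normal_density B / sm"
    and rle: "alpha * (1 - Phi A) + (1 - alpha) * Phi (-B) \<le> 1 - alpha"
  shows "A * sp / sqrt (sp\<^sup>2 + sI\<^sup>2) > B * sm / sqrt (sm\<^sup>2 + sI\<^sup>2)"
proof -
  have sp: "sp > 0" using sm spm by simp
  have c2: "(1 - alpha) * sp < alpha * sm"
    using cond a1 sp by (simp add: divide_simps split: if_splits)
  have ahalf: "1 - alpha < alpha"
  proof -
    have "(1 - alpha) * sm < (1 - alpha) * sp" using a1 spm by simp
    then have "(1 - alpha) * sm < alpha * sm" using c2 by simp
    then show ?thesis using sm by simp
  qed
  have e: "alpha * sm * exp (- A\<^sup>2 / 2) = (1 - alpha) * sp * exp (- B\<^sup>2 / 2)"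
    using foc sp sm unfolding std_normal_density_def by (simp add: field_simps)
  have "(1 - alpha) * sp * exp (- B\<^sup>2 / 2) < alpha * sm * exp (- B\<^sup>2 / 2)"
    using c2 by simp
  then have "exp (- A\<^sup>2 / 2) < exp (- B\<^sup>2 / 2)" using e a0 sm
    by (metis mult_less_cancel_left_pos mult_pos_pos)
  then have AB: "B\<^sup>2 < A\<^sup>2" by simp
  have Apos: "A > 0"
  proof (rule ccontr)
    assume "\<not> A > 0"
    then have "A \<le> 0" by simp
    have "\<bar>B\<bar> < - A"
    proof -
      have "\<bar>B\<bar>\<^sup>2 < (-A)\<^sup>2" using AB by simp
      then show ?thesis using \<open>A \<le> 0\<close> by (smt (verit) abs_ge_zero power_mono)
    qed
    then have p1: "Phi \<bar>B\<bar> < Phi (-A)" by (simp add: Phi_mono_iff)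
    have p2: "Phi (- \<bar>B\<bar>) \<le> Phi (-B)"
      using Phi_mono_iff[of "-B" "-\<bar>B\<bar>"] by (cases "B = \<bar>B\<bar>") auto
    have r: "alpha * (1 - Phi A) + (1 - alpha) * Phi (-B) = alpha * Phi (-A) + (1 - alpha) * Phi (-B)"
      by (simp add: Phi_neg)
    have s1: "alpha * Phi (-A) + (1 - alpha) * Phi (-B) > alpha * Phi \<bar>B\<bar> + (1 - alpha) * Phi (- \<bar>B\<bar>)"
      using p1 p2 a0 a1 by (intro add_less_le_mono) auto
    have s2: "alpha * Phi \<bar>B\<bar> + (1 - alpha) * Phi (- \<bar>B\<bar>) = (2 * alpha - 1) * Phi \<bar>B\<bar> + (1 - alpha)"
      by (simp add: Phi_neg algebra_simps)
    have s3: "(2 * alpha - 1) * Phi \<bar>B\<bar> \<ge> 0" using ahalf Phi_nonneg[of "\<bar>B\<bar>"] by simp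
    show False using r s1 s2 s3 rle by linarith
  qed
  have AgB: "A > \<bar>B\<bar>"
  proof -
    have "\<bar>B\<bar>\<^sup>2 < A\<^sup>2" using AB by simp
    then show ?thesis using Apos by (smt (verit) abs_ge_zero power_mono)
  qed
  define tp where "tp = sqrt (sp\<^sup>2 + sI\<^sup>2)"
  define tm where "tm = sqrt (sm\<^sup>2 + sI\<^sup>2)"
  have tp: "tp > 0" unfolding tp_def using sp by (simp add: add_pos_nonneg)
  have tm: "tm > 0" unfolding tm_def using sm by (simp add: add_pos_nonneg)
  have ratio: "sm / tm \<le> sp / tp"
  proof -
    have "sm\<^sup>2 * sI\<^sup>2 \<le> sp\<^sup>2 * sI\<^sup>2"
      using spm sm by (intro mult_right_mono power_mono) auto
    then have "sm\<^sup>2 * (sp\<^sup>2 + sI\<^sup>2) \<le> sp\<^sup>2 * (sm\<^sup>2 + sI\<^sup>2)"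
      by (simp add: algebra_simps)
    then have sq: "(sm * tp)\<^sup>2 \<le> (sp * tm)\<^sup>2"
      unfolding tp_def tm_def by (simp add: power_mult_distrib)
    have "sm * tp \<le> sp * tm"
      using power2_le_imp_le[OF sq] sp tm by simp
    then show ?thesis using tp tm by (simp add: divide_simps mult.commute)
  qed
  have "B * sm / tm \<le> \<bar>B\<bar> * (sm / tm)"
    using mult_right_mono[of B "\<bar>B\<bar>" "sm / tm"] sm tm by simp
  also have "\<dots> < A * (sm / tm)"
    using mult_strict_right_mono[OF AgB, of "sm / tm"] sm tm by simp
  also have "\<dots> \<le> A * (sp / tp)"
    using mult_left_mono[OF ratio, of A] Apos by simp
  finally show ?thesis unfolding tp_def tm_def by simp
qed

lemma clf_neg_set: "{x. lin_clf w b x = -1} = {x. \<not> (w \<bullet> x + b > 0)}"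
  by (auto simp: lin_clf_def)

lemma clf_pos_set: "{x. lin_clf w b x = 1} = {x. w \<bullet> x + b > 0}"
  by (auto simp: lin_clf_def)

lemma risk_formula:
  fixes w :: "real^'n::finite"
  assumes sp: "sp > 0" and sm: "sm > 0" and w: "w \<noteq> 0"
  shows "lin_risk alpha sp sm w b =
    alpha * (1 - Phi ((w \<bullet> ones + b) / (sp * norm w))) + (1 - alpha) * Phi ((w \<bullet> (- ones) + b) / (sm * norm w))"
  unfolding lin_risk_def clf_neg_set clf_pos_set
  using gauss_nonpos_event[OF sp w, where mu=ones and b=b] gauss_pos_event[OF sm w, where mu="- ones" and b=b]
  by simp

lemma risk_zero:
  assumes sp: "sp > 0" and sm: "sm > 0"
  shows "lin_risk alpha sp sm (0 :: real^'n::finite) b = (if b > 0 then 1 - alpha else alpha)"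
proof -
  interpret P1: prob_space "gauss (ones :: real^'n) sp" by (rule gauss_prob[OF sp])
  interpret P2: prob_space "gauss (- ones :: real^'n) sm" by (rule gauss_prob[OF sm])
  have u1: "measure (gauss (ones :: real^'n) sp) UNIV = 1" using P1.prob_space by simp
  have u2: "measure (gauss (- ones :: real^'n) sm) UNIV = 1" using P2.prob_space by simp
  show ?thesis unfolding lin_risk_def clf_neg_set clf_pos_set using u1 u2 by simp
qed

lemma smooth_formulas:
  fixes w mu :: "real^'n::finite"
  assumes s: "s > 0" and sI: "sI \<ge> 0" and w: "w \<noteq> 0"
  shows "measure (gauss mu s \<Otimes>\<^sub>M gauss 0 sI) {(x, e). w \<bullet> (x + e) + b > 0}
           = Phi ((w \<bullet> mu + b) / (norm w * sqrt (s\<^sup>2 + sI\<^sup>2)))"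
    and "measure (gauss mu s \<Otimes>\<^sub>M gauss 0 sI) {(x, e). w \<bullet> (x + e) + b < 0}
           = Phi (- (w \<bullet> mu + b) / (norm w * sqrt (s\<^sup>2 + sI\<^sup>2)))"
proof -
  have Qp: "prob_space (gauss mu s \<Otimes>\<^sub>M gauss 0 sI)"
    by (rule prob_space_pair[OF gauss_prob[OF s] gauss_prob'[OF sI]])
  have pos: "norm w * sqrt (s\<^sup>2 + sI\<^sup>2) > 0" using w s by (simp add: add_pos_nonneg)
  have sp: "space (gauss mu s \<Otimes>\<^sub>M gauss (0 :: real^'n) sI) = UNIV"
    by (simp add: space_pair_measure)
  have e1: "{(x, e). w \<bullet> (x + e) + b > 0} = {p \<in> space (gauss mu s \<Otimes>\<^sub>M gauss 0 sI). w \<bullet> (fst p + snd p) + b > 0}"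
    unfolding sp by auto
  have e2: "{(x, e). w \<bullet> (x + e) + b < 0} = {p \<in> space (gauss mu s \<Otimes>\<^sub>M gauss 0 sI). w \<bullet> (fst p + snd p) + b < 0}"
    unfolding sp by auto
  show "measure (gauss mu s \<Otimes>\<^sub>M gauss 0 sI) {(x, e). w \<bullet> (x + e) + b > 0}
           = Phi ((w \<bullet> mu + b) / (norm w * sqrt (s\<^sup>2 + sI\<^sup>2)))"
    unfolding e1 by (rule normal_events(2)[OF Qp smooth_distr[OF s sI w] pos])
  show "measure (gauss mu s \<Otimes>\<^sub>M gauss 0 sI) {(x, e). w \<bullet> (x + e) + b < 0}
           = Phi (- (w \<bullet> mu + b) / (norm w * sqrt (s\<^sup>2 + sI\<^sup>2)))"
    unfolding e2 by (rule normal_events(1)[OF Qp smooth_distr[OF s sI w] pos])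
qed

lemma Phi_deriv_chain:
  assumes "(f has_real_derivative f') (at x)"
  shows "((\<lambda>x. Phi (f x)) has_real_derivative std_normal_density (f x) * f') (at x)"
  by (rule DERIV_chain2[OF Phi_deriv assms])

theorem lemmaD2:
  fixes alpha sp sm sI b :: real and w :: "real^'n::finite"
  assumes "0 < alpha" "alpha < 1" "sp > 0" "sm > 0" "sI \<ge> 0"
    and "\<forall>(w'::real^'n) b'. lin_risk alpha sp sm w b \<le> lin_risk alpha sp sm w' b'"
    and "sp > sm"
    and "alpha * sm / ((1 - alpha) * sp) > 1"
  shows "smooth_pos sI sp w b > smooth_neg sI sm w b"
proof -
  note a0 = assms(1) and a1 = assms(2) and sp = assms(3) and sm = assms(4) and sI = assms(5)
    and opt = assms(6) and spm = assms(7) and cond = assms(8)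
  have ahalf: "1 - alpha < alpha"
  proof -
    have c2: "(1 - alpha) * sp < alpha * sm"
      using cond a1 sp by (simp add: divide_simps split: if_splits)
    have "(1 - alpha) * sm < (1 - alpha) * sp" using a1 spm by simp
    then have "(1 - alpha) * sm < alpha * sm" using c2 by simp
    then show ?thesis using sm by simp
  qed
  have r01: "lin_risk alpha sp sm w b \<le> 1 - alpha"
    using opt[rule_format, of 0 1] risk_zero[OF sp sm, where alpha=alpha and b=1 and 'n='n] by simp
  show ?thesis
  proof (cases "w = 0")
    case True
    have bpos: "b > 0"
    proof (rule ccontr)
      assume "\<not> b > 0"
      then have "lin_risk alpha sp sm w b = alpha" using True risk_zero[OF sp sm, where alpha=alpha and b=b and 'n='n] by simp
      then show False using r01 ahalf by simp
    qed
    interpret Q: prob_space "gauss (ones :: real^'n) sp \<Otimes>\<^sub>M gauss 0 sI"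
      by (rule prob_space_pair[OF gauss_prob[OF sp] gauss_prob'[OF sI]])
    have "{(x :: real^'n, e :: real^'n). w \<bullet> (x + e) + b > 0} = space (gauss (ones :: real^'n) sp \<Otimes>\<^sub>M gauss 0 sI)"
      using True bpos by (auto simp: space_pair_measure)
    then have "smooth_pos sI sp w b = 1" unfolding smooth_pos_def by (simp add: Q.prob_space)
    moreover have "{(x :: real^'n, e :: real^'n). w \<bullet> (x + e) + b < 0} = {}"
      using True bpos by auto
    then have "smooth_neg sI sm w b = 0" unfolding smooth_neg_def by simp
    ultimately show ?thesis by simp
  next
    case False
    then have w: "w \<noteq> 0" .
    define n where "n = norm w"
    define m where "m = w \<bullet> ones"
    have n: "n > 0" using w by (simp add: n_def)
    have wm: "w \<bullet> (- ones) = - m" by (simp add: m_def)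
    define A where "A = (m + b) / (sp * n)"
    define B where "B = (m - b) / (sm * n)"
    define g where "g c = alpha * (1 - Phi ((m + c) / (sp * n))) + (1 - alpha) * Phi ((- m + c) / (sm * n))" for c
    have gR: "g c = lin_risk alpha sp sm w c" for c
      unfolding g_def risk_formula[OF sp sm w] wm by (simp add: m_def n_def)
    have gmin: "g b \<le> g c" for c
      unfolding gR using opt by blast
    have d1: "((\<lambda>c. Phi ((m + c) / (sp * n))) has_real_derivative
              std_normal_density ((m + b) / (sp * n)) * (1 / (sp * n))) (at b)"
      by (rule Phi_deriv_chain) (use sp sm n in \<open>auto intro!: derivative_eq_intros\<close>)
    have d2: "((\<lambda>c. Phi ((- m + c) / (sm * n))) has_real_derivative
              std_normal_density ((- m + b) / (sm * n)) * (1 / (sm * n))) (at b)"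
      by (rule Phi_deriv_chain) (use sp sm n in \<open>auto intro!: derivative_eq_intros\<close>)
    have dg: "(g has_real_derivative
        alpha * (0 - std_normal_density ((m + b) / (sp * n)) * (1 / (sp * n)))
        + (1 - alpha) * (std_normal_density ((- m + b) / (sm * n)) * (1 / (sm * n)))) (at b)"
      unfolding g_def[abs_def] by (intro DERIV_add DERIV_cmult DERIV_diff DERIV_const d1 d2)
    have l0: "alpha * (0 - std_normal_density ((m + b) / (sp * n)) * (1 / (sp * n)))
        + (1 - alpha) * (std_normal_density ((- m + b) / (sm * n)) * (1 / (sm * n))) = 0"
      by (rule DERIV_local_min[OF dg, of 1]) (auto intro: gmin)
    have symB: "std_normal_density ((- m + b) / (sm * n)) = std_normal_density B"
      unfolding B_def std_normal_density_def by (simp add: power2_eq_square field_simps)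
    have foc: "alpha * std_normal_density A / sp = (1 - alpha) * std_normal_density B / sm"
    proof -
      have h: "alpha * std_normal_density A / (sp * n) = (1 - alpha) * std_normal_density B / (sm * n)"
        using l0 symB unfolding A_def by (simp add: field_simps)
      have "alpha * std_normal_density A / sp = (alpha * std_normal_density A / (sp * n)) * n"
        using n sp by (simp add: field_simps)
      also have "\<dots> = ((1 - alpha) * std_normal_density B / (sm * n)) * n" using h by simp
      also have "\<dots> = (1 - alpha) * std_normal_density B / sm" using n sm by (simp add: field_simps)
      finally show ?thesis .
    qed
    have rle: "alpha * (1 - Phi A) + (1 - alpha) * Phi (-B) \<le> 1 - alpha"
    proof -
      have "(- m + b) / (sm * n) = - B" unfolding B_def minus_divide_left by simp
      then have "g b = alpha * (1 - Phi A) + (1 - alpha) * Phi (-B)"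
        unfolding g_def A_def by simp
      then show ?thesis using r01 gR[of b] by simp
    qed
    have key: "A * sp / sqrt (sp\<^sup>2 + sI\<^sup>2) > B * sm / sqrt (sm\<^sup>2 + sI\<^sup>2)"
      by (rule key_analysis[OF a0 a1 sm spm sI cond foc rle])
    have tp: "sqrt (sp\<^sup>2 + sI\<^sup>2) > 0" using sp by (simp add: add_pos_nonneg)
    have tm: "sqrt (sm\<^sup>2 + sI\<^sup>2) > 0" using sm by (simp add: add_pos_nonneg)
    have "smooth_pos sI sp w b = Phi ((m + b) / (n * sqrt (sp\<^sup>2 + sI\<^sup>2)))"
      unfolding smooth_pos_def using smooth_formulas(1)[OF sp sI w, where mu=ones and b=b]
      by (simp add: m_def n_def)
    also have "(m + b) / (n * sqrt (sp\<^sup>2 + sI\<^sup>2)) = A * sp / sqrt (sp\<^sup>2 + sI\<^sup>2)"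
      unfolding A_def using sp n tp by (simp add: field_simps)
    finally have sp_eq: "smooth_pos sI sp w b = Phi (A * sp / sqrt (sp\<^sup>2 + sI\<^sup>2))" .
    have "smooth_neg sI sm w b = Phi (- (- m + b) / (n * sqrt (sm\<^sup>2 + sI\<^sup>2)))"
      unfolding smooth_neg_def using smooth_formulas(2)[OF sm sI w, where mu="- ones" and b=b] wm
      by (simp add: n_def)
    also have "- (- m + b) / (n * sqrt (sm\<^sup>2 + sI\<^sup>2)) = B * sm / sqrt (sm\<^sup>2 + sI\<^sup>2)"
      unfolding B_def using sm n tm by (simp add: field_simps)
    finally have sn_eq: "smooth_neg sI sm w b = Phi (B * sm / sqrt (sm\<^sup>2 + sI\<^sup>2))" .
    show ?thesis unfolding sp_eq sn_eq Phi_mono_iff by (rule key)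
  qed
qed

end
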